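(* The myopic sensing policy is not optimal in general. More precisely, both of the following hold for $N=6$, $k=3$, $T=2$: (a) there exist transition probabilities with $p_{11}>p_{01}$ and an initial belief vector $\omega(1)\in[0,1]^6$ for which some sensing policy achieves strictly larger expected total reward than the myopic sensing policy; (b) there exist transition probabilities with $p_{11}<p_{01}$ and an initial belief vector $\omega(1)\in[0,1]^6$ for which the same holds.
   Context: Opportunistic spectrum access model. There are $N$ channels. The state $S_i(t)\in\{0,1\}$ of channel $i$ in slot $t$ (0 = busy, 1 = idle) evolves as a two-state discrete-time Markov chain with transition probabilities $p_{ij}=\Pr(S_i(t+1)=j\mid S_i(t)=i)$. The chains are independent across channels and all have the same transition probabilities $p_{01},p_{11}\in[0,1]$. The initial states are independent with $\Pr(S_i(1)=1)=\omega_i(1)$. In each slot $t=1,\dots,T$, a user senses a set of exactly $k$ channels, chosen based on past actions and observations. It observes their states and obtains reward $1$ if at least one sensed channel is idle, and reward $0$ otherwise. The objective is the expected total reward over $T$ slots. Beliefs $\omega_i(t)$ (conditional probability that channel $i$ is idle in slot $t$) update as follows: $\omega_i(t+1)=p_{11}$ if $i$ was sensed and found idle; $\omega_i(t+1)=p_{01}$ if $i$ was sensed and found busy; and $\omega_i(t+1)=\omega_i(t)p_{11}+(1-\omega_i(t))p_{01}$ if $i$ was not sensed. The myopic sensing policy senses, in each slot, $k$ channels with the largest current beliefs. *)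

theory Defs
  imports Complex_Main
begin

text \<open>Channels are indexed 0..N-1. A history is the list of past (sensed set A, set S of
  sensed channels found idle, S \<subseteq> A). A policy maps a history to the set of channels to sense.\<close>

type_synonym history = "(nat set \<times> nat set) list"
type_synonym policy = "history \<Rightarrow> nat set"

definition belief_update :: "real \<Rightarrow> real \<Rightarrow> (nat \<Rightarrow> real) \<Rightarrow> nat set \<times> nat set \<Rightarrow> nat \<Rightarrow> real" where
  "belief_update p01 p11 \<omega> AS = (\<lambda>i. if i \<in> snd AS then p11
       else if i \<in> fst AS then p01
       else \<omega> i * p11 + (1 - \<omega> i) * p01)"

definition belief :: "real \<Rightarrow> real \<Rightarrow> (nat \<Rightarrow> real) \<Rightarrow> history \<Rightarrow> nat \<Rightarrow> real" where
  "belief p01 p11 \<omega>1 h = foldl (belief_update p01 p11) \<omega>1 h"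

text \<open>Expected reward accumulated over the next n slots, given history h.
  Outcome S = set of idle channels among the sensed set A; reward 1 iff S nonempty.\<close>
fun exp_reward :: "real \<Rightarrow> real \<Rightarrow> (nat \<Rightarrow> real) \<Rightarrow> policy \<Rightarrow> nat \<Rightarrow> history \<Rightarrow> real" where
  "exp_reward p01 p11 \<omega>1 \<pi> 0 h = 0"
| "exp_reward p01 p11 \<omega>1 \<pi> (Suc n) h =
     (let b = belief p01 p11 \<omega>1 h; A = \<pi> h in
       (\<Sum>S\<in>Pow A. ((\<Prod>i\<in>S. b i) * (\<Prod>i\<in>A - S. 1 - b i)) *
          ((if S \<noteq> {} then 1 else 0) + exp_reward p01 p11 \<omega>1 \<pi> n (h @ [(A, S)]))))"

definition total_reward :: "real \<Rightarrow> real \<Rightarrow> (nat \<Rightarrow> real) \<Rightarrow> policy \<Rightarrow> nat \<Rightarrow> real" where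
  "total_reward p01 p11 \<omega>1 \<pi> T = exp_reward p01 p11 \<omega>1 \<pi> T []"

definition sensing_policy :: "nat \<Rightarrow> nat \<Rightarrow> policy \<Rightarrow> bool" where
  "sensing_policy N k \<pi> \<longleftrightarrow> (\<forall>h. \<pi> h \<subseteq> {..<N} \<and> card (\<pi> h) = k)"

text \<open>Myopic policy (any tie-breaking): senses k channels with largest current beliefs.\<close>
definition myopic_policy :: "nat \<Rightarrow> nat \<Rightarrow> real \<Rightarrow> real \<Rightarrow> (nat \<Rightarrow> real) \<Rightarrow> policy \<Rightarrow> bool" where
  "myopic_policy N k p01 p11 \<omega>1 \<pi> \<longleftrightarrow> sensing_policy N k \<pi> \<and>
     (\<forall>h. \<forall>i\<in>\<pi> h. \<forall>j\<in>{..<N} - \<pi> h. belief p01 p11 \<omega>1 h j \<le> belief p01 p11 \<omega>1 h i)"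

end

theory Submission
  imports Defs
begin

lemma sum_Pow_insert:
  assumes "finite A" "a \<notin> A"
  shows "(\<Sum>S\<in>Pow (insert a A). f S) = (\<Sum>S\<in>Pow A. f S) + (\<Sum>S\<in>Pow A. f (insert a S))"
proof -
  have "(\<Sum>S\<in>Pow (insert a A). f S) = (\<Sum>S\<in>Pow A. f S) + (\<Sum>S\<in>insert a ` Pow A. f S)"
    unfolding Pow_insert by (rule sum.union_disjoint) (use assms in auto)
  also have "(\<Sum>S\<in>insert a ` Pow A. f S) = (\<Sum>S\<in>Pow A. f (insert a S))"
    by (subst sum.reindex) (use assms in \<open>auto intro!: inj_onI simp: o_def\<close>)
  finally show ?thesis .
qed

lemma sum_ind:
  fixes b :: "nat \<Rightarrow> real"
  assumes "finite A"
  shows "(\<Sum>S\<in>Pow A. ((\<Prod>i\<in>S. b i) * (\<Prod>i\<in>A - S. 1 - b i)) * (if S \<noteq> {} then 1 else 0))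
     = 1 - (\<Prod>i\<in>A. 1 - b i)"
proof -
  have tot: "(\<Sum>S\<in>Pow A. (\<Prod>i\<in>S. b i) * (\<Prod>i\<in>A - S. 1 - b i)) = 1"
    using prod_add[OF assms, of b "\<lambda>i. 1 - b i"] by simp
  have "(\<Sum>S\<in>Pow A. ((\<Prod>i\<in>S. b i) * (\<Prod>i\<in>A - S. 1 - b i)) * (if S \<noteq> {} then 1 else 0))
     = (\<Sum>S\<in>Pow A. (\<Prod>i\<in>S. b i) * (\<Prod>i\<in>A - S. 1 - b i)) - (\<Sum>S\<in>{{}}. (\<Prod>i\<in>S. b i) * (\<Prod>i\<in>A - S. 1 - b i))"
  proof -
    have "(\<Sum>S\<in>Pow A. (\<Prod>i\<in>S. b i) * (\<Prod>i\<in>A - S. 1 - b i)) =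
      (\<Sum>S\<in>Pow A - {{}}. (\<Prod>i\<in>S. b i) * (\<Prod>i\<in>A - S. 1 - b i)) + (\<Sum>S\<in>{{}}. (\<Prod>i\<in>S. b i) * (\<Prod>i\<in>A - S. 1 - b i))"
      by (rule sum.subset_diff) (use assms in auto)
    moreover have "(\<Sum>S\<in>Pow A. ((\<Prod>i\<in>S. b i) * (\<Prod>i\<in>A - S. 1 - b i)) * (if S \<noteq> {} then 1 else 0))
       = (\<Sum>S\<in>Pow A - {{}}. (\<Prod>i\<in>S. b i) * (\<Prod>i\<in>A - S. 1 - b i))"
      by (rule sum.mono_neutral_cong_right) (use assms in auto)
    ultimately show ?thesis by simp
  qed
  then show ?thesis using tot by simp
qed

lemma exp1:
  assumes "finite (\<pi> h)"
  shows "exp_reward p01 p11 \<omega>1 \<pi> (Suc 0) h = 1 - (\<Prod>i\<in>\<pi> h. 1 - belief p01 p11 \<omega>1 h i)"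
  using sum_ind[OF assms, of "belief p01 p11 \<omega>1 h"] by (simp add: Let_def)

lemma top_prod:
  fixes b :: "nat \<Rightarrow> real"
  assumes "A \<subseteq> U" "B \<subseteq> U" "finite U" "card A = card B"
    "\<forall>i\<in>U. b i \<le> 1" "\<forall>i\<in>A. \<forall>j\<in>U - A. b j \<le> b i"
  shows "(\<Prod>i\<in>A. 1 - b i) \<le> (\<Prod>i\<in>B. 1 - b i)"
proof -
  have fA: "finite A" using assms(1,3) by (rule finite_subset)
  have fB: "finite B" using assms(2,3) by (rule finite_subset)
  have "card (A - B) = card (B - A)"
    using assms(4) fA fB by (metis card_Diff_subset_Int finite_Int inf_commute)
  then obtain g where g: "bij_betw g (A - B) (B - A)"
    using finite_same_card_bij fA fB by blast
  have eA: "(\<Prod>i\<in>A. 1 - b i) = (\<Prod>i\<in>A \<inter> B. 1 - b i) * (\<Prod>i\<in>A - B. 1 - b i)"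
    using prod.subset_diff[of "A \<inter> B" A "\<lambda>i. 1 - b i"] fA by (simp add: Diff_Int mult.commute)
  have eB: "(\<Prod>i\<in>B. 1 - b i) = (\<Prod>i\<in>A \<inter> B. 1 - b i) * (\<Prod>i\<in>B - A. 1 - b i)"
    using prod.subset_diff[of "A \<inter> B" B "\<lambda>i. 1 - b i"] fB by (simp add: Diff_Int mult.commute)
  have r: "(\<Prod>i\<in>B - A. 1 - b i) = (\<Prod>i\<in>A - B. 1 - b (g i))"
    using prod.reindex_bij_betw[OF g, of "\<lambda>i. 1 - b i"] by simp
  have m: "(\<Prod>i\<in>A - B. 1 - b i) \<le> (\<Prod>i\<in>A - B. 1 - b (g i))"
  proof (rule prod_mono)
    fix i assume i: "i \<in> A - B"
    then have "g i \<in> B - A" using g bij_betwE by blast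
    then show "0 \<le> 1 - b i \<and> 1 - b i \<le> 1 - b (g i)"
      using i assms by auto
  qed
  have nn: "0 \<le> (\<Prod>i\<in>A \<inter> B. 1 - b i)"
    by (rule prod_nonneg) (use assms in auto)
  show ?thesis unfolding eA eB r using m nn by (simp add: mult_left_mono)
qed

lemma myopic_eq:
  assumes "myopic_policy 6 3 p01 p11 \<omega>1 \<mu>" "D \<subseteq> {..<6}" "card D = 3"
    "\<forall>i\<in>D. \<forall>j<6. j \<notin> D \<longrightarrow> belief p01 p11 \<omega>1 h j \<le> belief p01 p11 \<omega>1 h i"
    "\<forall>i<6. belief p01 p11 \<omega>1 h i \<le> 1"
  shows "exp_reward p01 p11 \<omega>1 \<mu> (Suc 0) h = 1 - (\<Prod>i\<in>D. 1 - belief p01 p11 \<omega>1 h i)"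
proof -
  have s: "\<mu> h \<subseteq> {..<6}" "card (\<mu> h) = 3"
    using assms(1) unfolding myopic_policy_def sensing_policy_def by auto
  have t: "\<forall>i\<in>\<mu> h. \<forall>j\<in>{..<6} - \<mu> h. belief p01 p11 \<omega>1 h j \<le> belief p01 p11 \<omega>1 h i"
    using assms(1) unfolding myopic_policy_def by auto
  have "(\<Prod>i\<in>\<mu> h. 1 - belief p01 p11 \<omega>1 h i) \<le> (\<Prod>i\<in>D. 1 - belief p01 p11 \<omega>1 h i)"
    by (rule top_prod[OF s(1) assms(2)]) (use s assms t in auto)
  moreover have "(\<Prod>i\<in>D. 1 - belief p01 p11 \<omega>1 h i) \<le> (\<Prod>i\<in>\<mu> h. 1 - belief p01 p11 \<omega>1 h i)"
    by (rule top_prod[OF assms(2) s(1)]) (use s assms t in auto)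
  moreover have "finite (\<mu> h)" using s finite_subset by blast
  ultimately show ?thesis using exp1 by (metis order_antisym)
qed


lemma first_set:
  assumes "myopic_policy 6 3 p01 p11 \<omega>1 \<mu>"
    "\<forall>i\<in>{0,1,2}. \<forall>j\<in>{3,4,5}. \<omega>1 j < \<omega>1 (i::nat)"
  shows "\<mu> [] = {0,1,2}"
proof -
  have b: "belief p01 p11 \<omega>1 [] = \<omega>1" by (simp add: belief_def)
  have s: "\<mu> [] \<subseteq> {..<6}" "card (\<mu> []) = 3"
    using assms(1) unfolding myopic_policy_def sensing_policy_def by auto
  have t: "\<forall>i\<in>\<mu> []. \<forall>j\<in>{..<6} - \<mu> []. \<omega>1 j \<le> \<omega>1 i"
    using assms(1) b unfolding myopic_policy_def by metis
  have sub: "{0,1,2} \<subseteq> \<mu> []"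
  proof
    fix i :: nat assume i: "i \<in> {0,1,2}"
    show "i \<in> \<mu> []"
    proof (rule ccontr)
      assume n: "i \<notin> \<mu> []"
      have "\<mu> [] \<subseteq> {0,1,2} - {i}"
      proof
        fix j assume j: "j \<in> \<mu> []"
        have "\<omega>1 i \<le> \<omega>1 j" using t j n i by auto
        moreover have "j < 6" using s j by auto
        ultimately show "j \<in> {0,1,2} - {i}" using assms(2) i n j
          by (auto simp: less_Suc_eq numeral_eq_Suc)
      qed
      then have "card (\<mu> []) \<le> card ({0,1,2} - {i::nat})" by (intro card_mono) auto
      also have "\<dots> = 2" using i by auto
      finally show False using s by simp
    qed
  qed
  show ?thesis
  proof -
    have fin: "finite (\<mu> [])" by (rule finite_subset[OF s(1)]) simp
    have "card {0,1,2::nat} = card (\<mu> [])" using s by simp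
    then show ?thesis using card_subset_eq[OF fin sub] by simp
  qed
qed

definition wa :: "nat \<Rightarrow> real" where
  "wa i = (if i = 0 then 1 else if i = 1 then 9/10 else if i = 2 then 4/5 else if i = 3 then 1/5
           else if i = 4 then 1/5 else 1/10)"

definition pia :: policy where
  "pia h = (if h = [] then {0,2,4} else (let S = snd (hd h) in
     if 2 \<in> S \<and> 4 \<in> S then {0,2,4} else if 2 \<in> S then {0,1,2} else if 4 \<in> S then {0,1,4}
     else {0,1,3}))"

lemma pia_sp: "sensing_policy 6 3 pia"
  unfolding sensing_policy_def pia_def Let_def by auto

lemma sum_Pow3:
  assumes "a \<noteq> b" "a \<noteq> c" "b \<noteq> c"
  shows "(\<Sum>S\<in>Pow {a,b,c}. f S) = f {} + f {c} + f {b} + f {b,c} + f {a} + f {a,c} + f {a,b} + f {a,b,c}"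
  using assms by (simp add: sum_Pow_insert add.assoc)

lemma pia0: "pia [] = {0,2,4}" by (simp add: pia_def)

lemma pia_val: "total_reward 0 (3/10) wa pia 2 = 2031287 / 1250000"
  unfolding total_reward_def numeral_2_eq_2 exp_reward.simps(2)[of _ _ _ _ "Suc 0"] Let_def
  apply (simp only: pia0 append_Nil)
  apply (subst sum_Pow3, simp, simp, simp)
  apply (simp del: exp_reward.simps add: exp1 pia_def insert_Diff_if belief_def belief_update_def wa_def)
  done

lemma less6: "(\<forall>j::nat<6. P j) \<longleftrightarrow> P 0 \<and> P 1 \<and> P 2 \<and> P 3 \<and> P 4 \<and> P 5"
proof -
  have "(\<forall>j::nat<6. P j) \<longleftrightarrow> (\<forall>j\<in>{..<6}. P j)" by auto
  also have "{..<6::nat} = {..<Suc (Suc (Suc (Suc (Suc (Suc 0)))))}"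
    by (simp add: numeral_eq_Suc)
  also have "(\<forall>j\<in>{..<Suc (Suc (Suc (Suc (Suc (Suc 0)))))}. P j) \<longleftrightarrow> P 0 \<and> P 1 \<and> P 2 \<and> P 3 \<and> P 4 \<and> P 5"
    by (simp only: lessThan_Suc lessThan_0 ball_simps) (simp add: numeral_eq_Suc conj_ac)
  finally show ?thesis .
qed

lemma mua_val:
  assumes "myopic_policy 6 3 0 (3/10) wa \<mu>"
  shows "total_reward 0 (3/10) wa \<mu> 2 = 1013071 / 625000"
proof -
  have m0: "\<mu> [] = {0,1,2}" by (rule first_set[OF assms]) (simp add: wa_def)
  have e1: "exp_reward 0 (3/10) wa \<mu> (Suc 0) [({0,1,2},{0})] = 1 - (\<Prod>i\<in>{0,3,4}. 1 - belief 0 (3/10) wa [({0,1,2},{0})] i)"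
    by (rule myopic_eq[OF assms]) (simp_all add: less6 belief_def belief_update_def wa_def)
  have e2: "exp_reward 0 (3/10) wa \<mu> (Suc 0) [({0,1,2},{0,1})] = 1 - (\<Prod>i\<in>{0,1,4}. 1 - belief 0 (3/10) wa [({0,1,2},{0,1})] i)"
    by (rule myopic_eq[OF assms]) (simp_all add: less6 belief_def belief_update_def wa_def)
  have e3: "exp_reward 0 (3/10) wa \<mu> (Suc 0) [({0,1,2},{0,2})] = 1 - (\<Prod>i\<in>{0,2,4}. 1 - belief 0 (3/10) wa [({0,1,2},{0,2})] i)"
    by (rule myopic_eq[OF assms]) (simp_all add: less6 belief_def belief_update_def wa_def)
  have e4: "exp_reward 0 (3/10) wa \<mu> (Suc 0) [({0,1,2},{0,1,2})] = 1 - (\<Prod>i\<in>{0,1,2}. 1 - belief 0 (3/10) wa [({0,1,2},{0,1,2})] i)"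
    by (rule myopic_eq[OF assms]) (simp_all add: less6 belief_def belief_update_def wa_def)
  show ?thesis
  unfolding total_reward_def numeral_2_eq_2 exp_reward.simps(2)[of _ _ _ _ "Suc 0"] Let_def
  apply (simp only: m0 append_Nil)
  apply (subst sum_Pow3, simp, simp, simp)
  apply (simp only: e1 e2 e3 e4)
  apply (simp del: exp_reward.simps add: insert_Diff_if belief_def belief_update_def wa_def)
  done
qed

definition wb :: "nat \<Rightarrow> real" where
  "wb i = (if i = 0 then 1 else if i = 1 then 9/10 else if i = 2 then 4/5 else if i = 3 then 1/2
           else if i = 4 then 3/10 else 1/5)"

definition pib :: policy where
  "pib h = (if h = [] then {0,2,3} else (let S = snd (hd h) in
     if 2 \<in> S \<and> 3 \<in> S then {1,4,5} else if 2 \<in> S then {3,4,5} else if 3 \<in> S then {2,4,5}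
     else {2,3,5}))"

lemma pib_sp: "sensing_policy 6 3 pib"
  unfolding sensing_policy_def pib_def Let_def by auto

lemma pib0: "pib [] = {0,2,3}" by (simp add: pib_def)

lemma pib_val: "total_reward (4/5) 0 wb pib 2 = 150346 / 78125"
  unfolding total_reward_def numeral_2_eq_2 exp_reward.simps(2)[of _ _ _ _ "Suc 0"] Let_def
  apply (simp only: pib0 append_Nil)
  apply (subst sum_Pow3, simp, simp, simp)
  apply (simp del: exp_reward.simps add: exp1 pib_def insert_Diff_if belief_def belief_update_def wb_def)
  done

lemma mub_val:
  assumes "myopic_policy 6 3 (4/5) 0 wb \<mu>"
  shows "total_reward (4/5) 0 wb \<mu> 2 = 150238 / 78125"
proof -
  have m0: "\<mu> [] = {0,1,2}" by (rule first_set[OF assms]) (simp add: wb_def)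
  have e1: "exp_reward (4/5) 0 wb \<mu> (Suc 0) [({0,1,2},{0})] = 1 - (\<Prod>i\<in>{1,2,5}. 1 - belief (4/5) 0 wb [({0,1,2},{0})] i)"
    by (rule myopic_eq[OF assms]) (simp_all add: less6 belief_def belief_update_def wb_def)
  have e2: "exp_reward (4/5) 0 wb \<mu> (Suc 0) [({0,1,2},{0,1})] = 1 - (\<Prod>i\<in>{2,4,5}. 1 - belief (4/5) 0 wb [({0,1,2},{0,1})] i)"
    by (rule myopic_eq[OF assms]) (simp_all add: less6 belief_def belief_update_def wb_def)
  have e3: "exp_reward (4/5) 0 wb \<mu> (Suc 0) [({0,1,2},{0,2})] = 1 - (\<Prod>i\<in>{1,4,5}. 1 - belief (4/5) 0 wb [({0,1,2},{0,2})] i)"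
    by (rule myopic_eq[OF assms]) (simp_all add: less6 belief_def belief_update_def wb_def)
  have e4: "exp_reward (4/5) 0 wb \<mu> (Suc 0) [({0,1,2},{0,1,2})] = 1 - (\<Prod>i\<in>{3,4,5}. 1 - belief (4/5) 0 wb [({0,1,2},{0,1,2})] i)"
    by (rule myopic_eq[OF assms]) (simp_all add: less6 belief_def belief_update_def wb_def)
  show ?thesis
  unfolding total_reward_def numeral_2_eq_2 exp_reward.simps(2)[of _ _ _ _ "Suc 0"] Let_def
  apply (simp only: m0 append_Nil)
  apply (subst sum_Pow3, simp, simp, simp)
  apply (simp only: e1 e2 e3 e4)
  apply (simp del: exp_reward.simps add: insert_Diff_if belief_def belief_update_def wb_def)
  done
qed

theorem theorem3:
  shows "(\<exists>p01 p11 \<omega>1. p01 \<in> {0..1} \<and> p11 \<in> {0..1} \<and> p11 > p01 \<and> (\<forall>i<6. \<omega>1 i \<in> {0..1}) \<and>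
            (\<exists>\<pi>. sensing_policy 6 3 \<pi> \<and>
               (\<forall>\<mu>. myopic_policy 6 3 p01 p11 \<omega>1 \<mu> \<longrightarrow>
                    total_reward p01 p11 \<omega>1 \<mu> 2 < total_reward p01 p11 \<omega>1 \<pi> 2)))
       \<and> (\<exists>p01 p11 \<omega>1. p01 \<in> {0..1} \<and> p11 \<in> {0..1} \<and> p11 < p01 \<and> (\<forall>i<6. \<omega>1 i \<in> {0..1}) \<and>
            (\<exists>\<pi>. sensing_policy 6 3 \<pi> \<and>
               (\<forall>\<mu>. myopic_policy 6 3 p01 p11 \<omega>1 \<mu> \<longrightarrow>
                    total_reward p01 p11 \<omega>1 \<mu> 2 < total_reward p01 p11 \<omega>1 \<pi> 2)))"
proof
  show "\<exists>p01 p11 \<omega>1. p01 \<in> {0..1} \<and> p11 \<in> {0..1} \<and> p11 > p01 \<and> (\<forall>i<6. \<omega>1 i \<in> {0..1}) \<and>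
            (\<exists>\<pi>. sensing_policy 6 3 \<pi> \<and>
               (\<forall>\<mu>. myopic_policy 6 3 p01 p11 \<omega>1 \<mu> \<longrightarrow>
                    total_reward p01 p11 \<omega>1 \<mu> 2 < total_reward p01 p11 \<omega>1 \<pi> 2))"
    apply (rule exI[of _ 0], rule exI[of _ "3/10"], rule exI[of _ wa])
    apply (intro conjI)
    apply (simp_all add: wa_def less6)
    apply (rule exI[of _ pia])
    apply (intro conjI allI impI pia_sp)
    apply (subst mua_val, assumption)
    apply (subst pia_val)
    by simp
  show "\<exists>p01 p11 \<omega>1. p01 \<in> {0..1} \<and> p11 \<in> {0..1} \<and> p11 < p01 \<and> (\<forall>i<6. \<omega>1 i \<in> {0..1}) \<and>
            (\<exists>\<pi>. sensing_policy 6 3 \<pi> \<and>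
               (\<forall>\<mu>. myopic_policy 6 3 p01 p11 \<omega>1 \<mu> \<longrightarrow>
                    total_reward p01 p11 \<omega>1 \<mu> 2 < total_reward p01 p11 \<omega>1 \<pi> 2))"
    apply (rule exI[of _ "4/5"], rule exI[of _ 0], rule exI[of _ wb])
    apply (intro conjI)
    apply (simp_all add: wb_def less6)
    apply (rule exI[of _ pib])
    apply (intro conjI allI impI pib_sp)
    apply (subst mub_val, assumption)
    apply (subst pib_val)
    by simp
qed

end
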